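(* For all words $x,y$ over a finite alphabet $\Sigma$, $\mathrm{ged}(x,y)\le\mathrm{ned}(x,y)$.
   Context: An edit path from $x$ to $y$ is a sequence $p=(a_1,b_1)\cdots(a_n,b_n)$ with $(a_i,b_i)\in(\Sigma\cup\{\varepsilon\})^2\setminus\{(\varepsilon,\varepsilon)\}$, $a_1\cdots a_n=x$ and $b_1\cdots b_n=y$; $|p|=n$ and $\mathrm{wgt}(p)=|\{i:a_i\ne b_i\}|$ (uniform weights: no-ops cost $0$, substitutions, insertions and deletions cost $1$). $\mathrm{ed}(x,y)=\min_p\mathrm{wgt}(p)$; $\mathrm{ned}(x,y)=\min_p\mathrm{wgt}(p)/|p|$ (with $\mathrm{ned}(\varepsilon,\varepsilon)=0$); $\mathrm{ged}(x,y)=\frac{2\,\mathrm{ed}(x,y)}{|x|+|y|+\mathrm{ed}(x,y)}$ (with $\mathrm{ged}(\varepsilon,\varepsilon)=0$). *)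

theory Defs
  imports Complex_Main
begin

text \<open>An edit operation is a pair (a,b) with a,b in Sigma \<union> {epsilon};
  epsilon is represented by None.  The pair (epsilon,epsilon) is excluded.\<close>
type_synonym 'a edit_op = "'a option \<times> 'a option"

definition opt_word :: "'a option \<Rightarrow> 'a list" where
  "opt_word a = (case a of None \<Rightarrow> [] | Some c \<Rightarrow> [c])"

definition edit_paths :: "'a list \<Rightarrow> 'a list \<Rightarrow> 'a edit_op list set" where
  "edit_paths x y = {p. (\<forall>e\<in>set p. e \<noteq> (None, None))
                       \<and> concat (map (opt_word \<circ> fst) p) = x
                       \<and> concat (map (opt_word \<circ> snd) p) = y}"

text \<open>Uniform weights: number of positions with a_i \<noteq> b_i.\<close>
definition wgt :: "'a edit_op list \<Rightarrow> nat" where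
  "wgt p = length (filter (\<lambda>e. fst e \<noteq> snd e) p)"

definition ed :: "'a list \<Rightarrow> 'a list \<Rightarrow> nat" where
  "ed x y = (INF p\<in>edit_paths x y. wgt p)"

definition ned :: "'a list \<Rightarrow> 'a list \<Rightarrow> real" where
  "ned x y = (if x = [] \<and> y = [] then 0
              else (INF p\<in>edit_paths x y. real (wgt p) / real (length p)))"

definition ged :: "'a list \<Rightarrow> 'a list \<Rightarrow> real" where
  "ged x y = (if x = [] \<and> y = [] then 0
              else 2 * real (ed x y) / (real (length x) + real (length y) + real (ed x y)))"

end

theory Submission
  imports Defs
begin

lemma len_bound:
  assumes "\<forall>e\<in>set p. e \<noteq> (None, None)"
  shows "2 * length p \<le> length (concat (map (opt_word \<circ> fst) p))
            + length (concat (map (opt_word \<circ> snd) p)) + wgt p"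
  using assms
proof (induction p)
  case Nil
  then show ?case by (simp add: wgt_def)
next
  case (Cons e p)
  obtain a b where e: "e = (a, b)" by fastforce
  have "(a, b) \<noteq> (None, None)" using Cons.prems e by auto
  then have "2 \<le> length (opt_word a) + length (opt_word b) + (if a \<noteq> b then 1 else 0)"
    by (cases a; cases b) (auto simp: opt_word_def)
  with Cons show ?case by (simp add: e wgt_def split: if_splits)
qed

lemma paths_nonempty: "edit_paths x y \<noteq> {}"
proof -
  let ?p = "map (\<lambda>c. (Some c, None)) x @ map (\<lambda>c. (None, Some c)) y"
  have "?p \<in> edit_paths x y"
    unfolding edit_paths_def
    by (auto simp: opt_word_def o_def concat_map_singleton)
  then show ?thesis by blast
qed

lemma ed_le: "p \<in> edit_paths x y \<Longrightarrow> ed x y \<le> wgt p"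
  unfolding ed_def by (rule cINF_lower) auto

lemma key:
  fixes L e w n :: real
  assumes "0 \<le> e" "e \<le> w" "0 < n" "2 * n \<le> L + w" "0 < L + e" "0 \<le> L"
  shows "2 * e / (L + e) \<le> w / n"
proof -
  have "2 * e * n \<le> e * (L + w)" using mult_left_mono[OF assms(4) assms(1)] by simp
  also have "\<dots> \<le> w * (L + e)" using mult_right_mono[OF assms(2) assms(6)]
    by (simp add: algebra_simps)
  finally have "2 * e * n \<le> w * (L + e)" .
  then show ?thesis using assms by (simp add: divide_simps mult.commute)
qed

theorem mainTheorem11:
  fixes x y :: "'a::finite list"
  shows "ged x y \<le> ned x y"
proof (cases "x = [] \<and> y = []")
  case True
  then show ?thesis by (simp add: ged_def ned_def)
next
  case False
  have "ged x y \<le> (INF p\<in>edit_paths x y. real (wgt p) / real (length p))"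
  proof (rule cINF_greatest)
    show "edit_paths x y \<noteq> {}" by (rule paths_nonempty)
  next
    fix p assume p: "p \<in> edit_paths x y"
    have hp: "\<forall>e\<in>set p. e \<noteq> (None, None)"
      and hx: "concat (map (opt_word \<circ> fst) p) = x"
      and hy: "concat (map (opt_word \<circ> snd) p) = y"
      using p by (auto simp: edit_paths_def)
    have b: "2 * length p \<le> length x + length y + wgt p"
      using len_bound[OF hp] hx hy by simp
    have "p \<noteq> []" using hx hy False by auto
    then have n: "0 < real (length p)" by simp
    have e: "ed x y \<le> wgt p" by (rule ed_le[OF p])
    have pos: "0 < real (length x) + real (length y) + real (ed x y)"
    proof -
      have "0 < length x + length y" using False by auto
      then show ?thesis by linarith
    qed
    have "2 * real (ed x y) / (real (length x) + real (length y) + real (ed x y))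
          \<le> real (wgt p) / real (length p)"
      apply (rule key)
      using e n b pos by (simp_all, linarith?)
    then show "ged x y \<le> real (wgt p) / real (length p)"
      using False by (simp add: ged_def)
  qed
  moreover have "ned x y = (INF p\<in>edit_paths x y. real (wgt p) / real (length p))"
    using False unfolding ned_def by (simp only: if_False)
  ultimately show ?thesis by simp
qed

end
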